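(* In the following setting, $J$ is coercive, i.e. $\lim_{[u]_s\to+\infty}J(u)/[u]_s=+\infty$ over $u\in H^s_0(\Omega)$. Setting: $n\ge1$, $s\in(0,1)$, $\Omega\subset\mathbb{R}^n$ open bounded with Lipschitz boundary, $K$ a measurable symmetric kernel with $\frac{c\,\chi_{[0,\varrho)}(|x-z|)}{|x-z|^{n+2s}}\le K(x,z)\le\frac{C}{|x-z|^{n+2s}}$ for some $c,C>0$, $\varrho\in(0,+\infty]$; $h:\mathbb{R}\to\mathbb{R}$ continuous, odd, strictly increasing, $\mathcal H(t):=\int_0^th(\tau)d\tau$; $\eta\in L^\infty(\Omega)$ with $\eta\ge0$; $\zeta\in L^2(\Omega)$; and $$J(u)=\frac14\iint_{\mathbb{R}^n\times\mathbb{R}^n}|u(x)-u(z)|^2K(x,z)\,dx\,dz+\int_\Omega\eta\,\mathcal H(u)\,dx-\int_\Omega\zeta u\,dx\quad\text{if }\eta\,(\mathcal H\circ u)\in L^1(\Omega),$$ $J(u)=+\infty$ otherwise.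
   Context: $H^s_0(\Omega)=\{u\in H^s(\mathbb{R}^n):u=0\text{ a.e. outside }\Omega\}$ and $[u]_s=\left(c_{n,s}\iint_{\mathbb{R}^n\times\mathbb{R}^n}\frac{|u(x)-u(y)|^2}{|x-y|^{n+2s}}dx\,dy\right)^{1/2}$ with $c_{n,s}=\frac{2^{2s}\Gamma\left(\frac{n+2s}{2}\right)}{\pi^{n/2}\Gamma(2-s)}s(1-s)$. *)

theory Defs
  imports "HOL-Analysis.Analysis"
begin

definition lipschitz_boundary :: "(real^'n) set \<Rightarrow> bool" where
  "lipschitz_boundary \<Omega> \<longleftrightarrow>
     (\<forall>x0 \<in> frontier \<Omega>. \<exists>r>0. \<exists>e L. \<exists>g :: real^'n \<Rightarrow> real.
        norm e = 1 \<and> lipschitz_on L {y. y \<bullet> e = 0} g \<and>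
        \<Omega> \<inter> ball x0 r = {x \<in> ball x0 r. x \<bullet> e > g (x - (x \<bullet> e) *\<^sub>R e)})"

definition cns :: "nat \<Rightarrow> real \<Rightarrow> real" where
  "cns n s = (2::real) powr (2 * s) * Gamma ((real n + 2 * s)/2) / (pi powr (real n / 2) * Gamma (2 - s))
             * s * (1 - s)"

definition gagliardo_integral :: "real \<Rightarrow> (real^'n \<Rightarrow> real) \<Rightarrow> ennreal" where
  "gagliardo_integral s u =
     (\<integral>\<^sup>+ p. ennreal (\<bar>u (fst p) - u (snd p)\<bar>^2 / dist (fst p) (snd p) powr (real CARD('n) + 2 * s))
        \<partial>(lebesgue :: ((real^'n) \<times> (real^'n)) measure))"

definition gagliardo_seminorm :: "real \<Rightarrow> (real^'n \<Rightarrow> real) \<Rightarrow> real" where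
  "gagliardo_seminorm s u = sqrt (cns CARD('n) s * enn2real (gagliardo_integral s u))"

definition Hs :: "real \<Rightarrow> (real^'n \<Rightarrow> real) set" where
  "Hs s = {u. u \<in> borel_measurable lebesgue \<and> integrable lebesgue (\<lambda>x. (u x)^2)
              \<and> gagliardo_integral s u < \<infinity>}"

definition Hs0 :: "real \<Rightarrow> (real^'n) set \<Rightarrow> (real^'n \<Rightarrow> real) set" where
  "Hs0 s \<Omega> = {u \<in> Hs s. AE x in lebesgue. x \<notin> \<Omega> \<longrightarrow> u x = 0}"

definition primH :: "(real \<Rightarrow> real) \<Rightarrow> real \<Rightarrow> real" where
  "primH h t = (LBINT \<tau>=ereal 0..ereal t. h \<tau>)"

definition energyJ :: "(real^'n \<Rightarrow> real^'n \<Rightarrow> real) \<Rightarrow> (real \<Rightarrow> real) \<Rightarrow> (real^'n \<Rightarrow> real)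
     \<Rightarrow> (real^'n \<Rightarrow> real) \<Rightarrow> (real^'n) set \<Rightarrow> (real^'n \<Rightarrow> real) \<Rightarrow> ereal" where
  "energyJ K h \<eta> \<zeta> \<Omega> u =
     (if set_integrable lebesgue \<Omega> (\<lambda>x. \<eta> x * primH h (u x)) then
        ereal (1/4) * enn2ereal (\<integral>\<^sup>+ p. ennreal (\<bar>u (fst p) - u (snd p)\<bar>^2 * K (fst p) (snd p))
                                    \<partial>(lebesgue :: ((real^'n) \<times> (real^'n)) measure))
        + ereal (set_lebesgue_integral lebesgue \<Omega> (\<lambda>x. \<eta> x * primH h (u x)))
        - ereal (set_lebesgue_integral lebesgue \<Omega> (\<lambda>x. \<zeta> x * u x))
      else \<infinity>)"

end

theory Submission
  imports Defs
begin

lemma meas_prod_lborel: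
  "f \<in> borel_measurable (borel \<Otimes>\<^sub>M borel) \<Longrightarrow> f \<in> borel_measurable (lborel :: ('a::euclidean_space \<times> 'b::euclidean_space) measure)"
  by (simp add: borel_prod)

lemma nn_translate:
  fixes c :: "'a::euclidean_space"
  assumes [measurable]: "f \<in> borel_measurable borel"
  shows "(\<integral>\<^sup>+x. f (c + x) \<partial>lborel) = (\<integral>\<^sup>+x. f x \<partial>lborel)"
proof -
  have "(\<integral>\<^sup>+x. f x \<partial>lborel) = (\<integral>\<^sup>+x. f x \<partial>distr lborel borel ((+) c))"
    by (simp add: lborel_distr_plus)
  also have "\<dots> = (\<integral>\<^sup>+x. f (c + x) \<partial>lborel)"
    by (rule nn_integral_distr) auto
  finally show ?thesis ..
qed

lemma telesc_sq:
  fixes w :: "'a::real_normed_vector \<Rightarrow> real"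
  assumes w0: "\<And>x. norm x \<ge> R \<Longrightarrow> w x = 0" and hN: "2*R \<le> real N * norm h" and R: "R > 0"
  shows "(w x)^2 \<le> real N * (\<Sum>k<N. (w (real k *\<^sub>R h + x) - w (real k *\<^sub>R h + x + h))^2)"
proof (cases "norm x \<ge> R")
  case True then show ?thesis by (simp add: w0 sum_nonneg)
next
  case False
  have "norm (real N *\<^sub>R h + x) \<ge> norm (real N *\<^sub>R h) - norm x" by (rule norm_diff_ineq)
  then have "norm (real N *\<^sub>R h + x) \<ge> R" using False hN by simp
  then have wN: "w (real N *\<^sub>R h + x) = 0" by (rule w0)
  have "(\<Sum>k<N. w (real k *\<^sub>R h + x) - w (real (Suc k) *\<^sub>R h + x)) = w (real 0 *\<^sub>R h + x) - w (real N *\<^sub>R h + x)"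
    by (rule sum_lessThan_telescope')
  then have tel: "(\<Sum>k<N. w (real k *\<^sub>R h + x) - w (real k *\<^sub>R h + x + h)) = w x"
    using wN by (simp add: algebra_simps)
  have "(\<Sum>k<N. 1 * (w (real k *\<^sub>R h + x) - w (real k *\<^sub>R h + x + h)))^2
     \<le> (\<Sum>k<N. 1^2) * (\<Sum>k<N. (w (real k *\<^sub>R h + x) - w (real k *\<^sub>R h + x + h))^2)"
    by (rule Cauchy_Schwarz_ineq_sum)
  then show ?thesis using tel by simp
qed


lemma poinc_h:
  fixes w :: "'a::euclidean_space \<Rightarrow> real"
  assumes wm[measurable]: "w \<in> borel_measurable borel"
    and w0: "\<And>x. norm x \<ge> R \<Longrightarrow> w x = 0" and hN: "2*R \<le> real N * norm h" and R: "R > 0"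
  shows "(\<integral>\<^sup>+x. ennreal ((w x)^2) \<partial>lborel)
    \<le> ennreal (real N * real N) * (\<integral>\<^sup>+y. ennreal ((w y - w (y + h))^2) \<partial>lborel)"
proof -
  define D where "D = (\<integral>\<^sup>+y. ennreal ((w y - w (y + h))^2) \<partial>lborel)"
  have "(\<integral>\<^sup>+x. ennreal ((w x)^2) \<partial>lborel)
     \<le> (\<integral>\<^sup>+x. ennreal (real N) * (\<Sum>k<N. ennreal ((w (real k *\<^sub>R h + x) - w (real k *\<^sub>R h + x + h))^2)) \<partial>lborel)"
    apply (intro nn_integral_mono)
    apply (subst sum_ennreal, simp)
    apply (subst ennreal_mult'[symmetric], simp)
    apply (rule ennreal_leI)
    by (rule telesc_sq[OF w0 hN R])
  also have "\<dots> = ennreal (real N) * (\<Sum>k<N. (\<integral>\<^sup>+x. ennreal ((w (real k *\<^sub>R h + x) - w (real k *\<^sub>R h + x + h))^2) \<partial>lborel))"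
    apply (subst nn_integral_cmult)
     apply measurable
    apply (subst nn_integral_sum)
     apply measurable
    done
  also have "\<dots> = ennreal (real N) * (\<Sum>k<N. D)"
  proof -
    have "(\<integral>\<^sup>+x. ennreal ((w (real k *\<^sub>R h + x) - w (real k *\<^sub>R h + x + h))^2) \<partial>lborel) = D" for k
      unfolding D_def
      by (rule nn_translate[of "\<lambda>y. ennreal ((w y - w (y + h))^2)" "real k *\<^sub>R h"]) simp
    then show ?thesis by simp
  qed
  also have "\<dots> = ennreal (real N * real N) * D"
    by (simp add: ennreal_mult' mult.assoc ennreal_of_nat_eq_real_of_nat)
  finally show ?thesis unfolding D_def .
qed


lemma poinc:
  fixes w :: "'a::euclidean_space \<Rightarrow> real" and a :: 'a
  assumes wm[measurable]: "w \<in> borel_measurable borel"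
    and w0: "\<And>x. norm x \<ge> R \<Longrightarrow> w x = 0" and R: "R > 0" and r: "r > 0"
    and hN: "2*R \<le> real N * (r/4)" and a: "norm a = 3*r/8" and p: "p \<ge> 0"
  shows "emeasure lborel (ball a (r/8)) * (\<integral>\<^sup>+x. ennreal ((w x)^2) \<partial>lborel)
    \<le> ennreal (real N * real N * r powr p) *
       (\<integral>\<^sup>+q. ennreal (if dist (fst q) (snd q) < r then \<bar>w (fst q) - w (snd q)\<bar>^2 / dist (fst q) (snd q) powr p else 0) \<partial>lborel)"
proof -
  define \<Phi> where "\<Phi> = (\<lambda>y z. ennreal (if dist y z < r then \<bar>w y - w z\<bar>^2 / dist y z powr p else 0))"
  have \<Phi>c[measurable]: "(\<lambda>x. \<Phi> (f x) (g x)) \<in> borel_measurable M"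
    if [measurable]: "f \<in> M \<rightarrow>\<^sub>M borel" "g \<in> M \<rightarrow>\<^sub>M borel" for f g and M :: "'b measure"
    unfolding \<Phi>_def by measurable
  have \<Phi>m0: "(\<lambda>q. \<Phi> (fst q) (snd q)) \<in> borel_measurable (borel \<Otimes>\<^sub>M borel)"
    unfolding \<Phi>_def by measurable
  have \<Phi>m[measurable]: "(\<lambda>q. \<Phi> (fst q) (snd q)) \<in> borel_measurable (lborel \<Otimes>\<^sub>M lborel)"
    using \<Phi>m0 by (simp cong: measurable_cong_sets)
  have \<Phi>m2[measurable]: "(\<lambda>q. \<Phi> (fst q) (snd q)) \<in> borel_measurable borel"
    using \<Phi>m0 by (simp add: borel_prod)
  define P where "P = (\<integral>\<^sup>+x. ennreal ((w x)^2) \<partial>lborel)"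
  define B where "B = ball a (r/8)"
  have hB: "r/4 < norm h \<and> norm h < r" if "h \<in> B" for h
  proof -
    have "dist a h < r/8" using that by (simp add: B_def)
    then have "norm (a - h) < r/8" by (simp add: dist_norm)
    moreover have "norm a \<le> norm h + norm (a - h)" by (metis add_diff_cancel_left' norm_triangle_ineq add.commute diff_add_cancel)
    moreover have "norm h \<le> norm a + norm (a - h)" by (metis norm_triangle_sub norm_minus_commute)
    ultimately show ?thesis using a r by auto
  qed
  have "emeasure lborel B * P = (\<integral>\<^sup>+h. P * indicator B h \<partial>lborel)"
    by (simp add: B_def nn_integral_cmult_indicator mult.commute)
  also have "\<dots> \<le> (\<integral>\<^sup>+h. ennreal (real N * real N * r powr p) * (\<integral>\<^sup>+y. \<Phi> y (y + h) \<partial>lborel) \<partial>lborel)"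
  proof (intro nn_integral_mono)
    fix h :: 'a
    show "P * indicator B h \<le> ennreal (real N * real N * r powr p) * (\<integral>\<^sup>+y. \<Phi> y (y + h) \<partial>lborel)"
    proof (cases "h \<in> B")
      case False then show ?thesis by simp
    next
      case True
      note hb = hB[OF True]
      have "2*R \<le> real N * norm h"
        using hN hb mult_left_mono[of "r/4" "norm h" "real N"] by simp
      then have "P \<le> ennreal (real N * real N) * (\<integral>\<^sup>+y. ennreal ((w y - w (y + h))^2) \<partial>lborel)"
        unfolding P_def using poinc_h[OF wm w0 _ R] by blast
      also have "(\<integral>\<^sup>+y. ennreal ((w y - w (y + h))^2) \<partial>lborel) \<le> (\<integral>\<^sup>+y. ennreal (r powr p) * \<Phi> y (y + h) \<partial>lborel)"
      proof (intro nn_integral_mono)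
        fix y :: 'a
        have dy: "dist y (y + h) = norm h" by (simp add: dist_norm)
        have hp: "0 < norm h powr p" "norm h powr p \<le> r powr p"
          using hb r p by (auto intro: powr_mono2)
        have "(w y - w (y + h))^2 \<le> r powr p * (\<bar>w y - w (y + h)\<bar>^2 / norm h powr p)"
        proof -
          have "(w y - w (y + h))^2 * norm h powr p \<le> r powr p * \<bar>w y - w (y + h)\<bar>^2"
            using hp by (simp add: mult.commute mult_right_mono)
          then show ?thesis using hp by (simp add: field_simps)
        qed
        then show "ennreal ((w y - w (y + h))^2) \<le> ennreal (r powr p) * \<Phi> y (y + h)"
          unfolding \<Phi>_def using dy hb by (simp add: ennreal_mult'[symmetric] ennreal_leI)
      qed
      also have "\<dots> = ennreal (r powr p) * (\<integral>\<^sup>+y. \<Phi> y (y + h) \<partial>lborel)"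
        by (rule nn_integral_cmult) measurable
      finally have "P \<le> ennreal (real N * real N) * (ennreal (r powr p) * (\<integral>\<^sup>+y. \<Phi> y (y + h) \<partial>lborel))"
        by (simp add: mult_left_mono)
      moreover have "ennreal (real N * real N) * (ennreal (r powr p) * (\<integral>\<^sup>+y. \<Phi> y (y + h) \<partial>lborel))
          = ennreal (real N * real N * r powr p) * (\<integral>\<^sup>+y. \<Phi> y (y + h) \<partial>lborel)"
        by (simp add: ennreal_mult mult.assoc)
      ultimately show ?thesis using True by simp
    qed
  qed
  also have "\<dots> = ennreal (real N * real N * r powr p) * (\<integral>\<^sup>+h. \<integral>\<^sup>+y. \<Phi> y (y + h) \<partial>lborel \<partial>lborel)"
    by (rule nn_integral_cmult) measurable
  also have "(\<integral>\<^sup>+h. \<integral>\<^sup>+y. \<Phi> y (y + h) \<partial>lborel \<partial>lborel) = (\<integral>\<^sup>+y. \<integral>\<^sup>+h. \<Phi> y (y + h) \<partial>lborel \<partial>lborel)"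
    by (rule lborel_pair.Fubini') measurable
  also have "\<dots> = (\<integral>\<^sup>+y. \<integral>\<^sup>+z. \<Phi> y z \<partial>lborel \<partial>lborel)"
    by (intro nn_integral_cong nn_translate) measurable
  also have "\<dots> = (\<integral>\<^sup>+q. \<Phi> (fst q) (snd q) \<partial>(lborel \<Otimes>\<^sub>M lborel))"
    by (subst lborel.nn_integral_fst[symmetric]) auto
  also have "\<dots> = (\<integral>\<^sup>+q. \<Phi> (fst q) (snd q) \<partial>lborel)"
    by (simp add: lborel_prod)
  finally show ?thesis unfolding B_def P_def \<Phi>_def .
qed

lemma dyadic_k:
  fixes t r :: real assumes r: "r > 0" and t: "t \<ge> r"
  shows "\<exists>k::nat. 2^k * r \<le> t \<and> t < 2^(Suc k) * r"
proof -
  obtain n where n: "t / r < 2^n" using real_arch_pow[of 2 "t/r"] by auto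
  define m where "m = (LEAST n. t < 2^n * r)"
  have tm: "t < 2^m * r" unfolding m_def by (rule LeastI[of _ n]) (use n r in \<open>simp add: field_simps\<close>)
  have m0: "m \<noteq> 0" using tm t by (cases m) auto
  then obtain k where mk: "m = Suc k" by (cases m) auto
  have "\<not> t < 2^k * r" unfolding m_def[symmetric] using mk unfolding m_def
    by (metis lessI not_less_Least)
  then show ?thesis using tm mk by (intro exI[of _ k]) auto
qed

lemma tail_finite:
  fixes r p :: real
  assumes r: "r > 0" and p: "p > DIM('a)"
  shows "(\<integral>\<^sup>+y. ennreal (if norm y \<ge> r then 1 / norm y powr p else 0) \<partial>(lborel::'a::euclidean_space measure)) < \<infinity>"
proof -
  define n where "n = DIM('a)"
  define V where "V = unit_ball_vol (real n)"
  define q where "q = (2::real) powr (real n - p)"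
  have "(2::real) powr (real n - p) < 2 powr 0" using p by (subst powr_less_cancel_iff) (auto simp: n_def)
  then have q: "0 < q" "q < 1" by (auto simp: q_def)
  define f where "f = (\<lambda>k::nat. \<lambda>y::'a. ennreal ((2^k * r) powr (-p)) * indicator (cball 0 (2^(Suc k) * r)) y)"
  have fm[measurable]: "f k \<in> borel_measurable lborel" for k unfolding f_def by (intro borel_measurable_times_ennreal measurable_const borel_measurable_indicator) auto
  have "(\<integral>\<^sup>+y. ennreal (if norm y \<ge> r then 1 / norm y powr p else 0) \<partial>(lborel::'a measure))
      \<le> (\<integral>\<^sup>+y. (\<Sum>k. f k y) \<partial>lborel)"
  proof (intro nn_integral_mono)
    fix y :: 'a
    show "ennreal (if norm y \<ge> r then 1 / norm y powr p else 0) \<le> (\<Sum>k. f k y)"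
    proof (cases "norm y \<ge> r")
      case False then show ?thesis by simp
    next
      case True
      obtain k where k: "2^k * r \<le> norm y" "norm y < 2^(Suc k) * r" using dyadic_k[OF r True] by blast
      have pos: "0 < 2^k * r" using r by simp
      have rne: "r \<noteq> 0" using r by simp
      have p0: "p \<ge> 0" using p by simp
      have "(2^k*r) powr p \<le> norm y powr p" by (rule powr_mono2) (use p0 pos k rne in auto)
      moreover have "0 < (2^k*r) powr p" using pos rne by simp
      ultimately have "1 / norm y powr p \<le> 1 / (2^k*r) powr p"
        using True r by (intro divide_left_mono mult_pos_pos) auto
      then have "1 / norm y powr p \<le> (2^k * r) powr (-p)"
        by (simp add: powr_minus_divide)
      then have "ennreal (1 / norm y powr p) \<le> f k y"
        unfolding f_def using k by (simp add: ennreal_leI dist_norm)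
      also have "f k y \<le> (\<Sum>k. f k y)"
        using sum_le_suminf[OF summableI, of "{k}" "\<lambda>k. f k y"] by simp
      finally show ?thesis using True by simp
    qed
  qed
  also have "\<dots> = (\<Sum>k. integral\<^sup>N lborel (f k))" by (rule nn_integral_suminf) simp
  also have "\<dots> = (\<Sum>k. ennreal (2 powr n * V * r powr (n - p) * q^k))"
  proof (intro suminf_cong)
    fix k :: nat
    have e: "integral\<^sup>N lborel (f k) = ennreal ((2^k * r) powr (-p)) * ennreal (V * (2^(Suc k) * r) ^ n)"
      unfolding f_def using r by (simp add: nn_integral_cmult_indicator emeasure_cball V_def n_def)
    have X: "(2^k * r) powr (-p) * (V * (2^(Suc k) * r) ^ n) = 2 powr n * V * r powr (n - p) * q^k"
    proof -
      have a: "(2^(Suc k) * r) ^ n = 2 powr n * (2^k * r) powr n"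
        using r by (simp add: powr_realpow[symmetric] powr_mult)
      have b: "(2^k * r) powr (-p) * (2^k * r) powr n = (2^k * r) powr (n - p)"
        by (simp add: powr_add[symmetric])
      have c: "(2^k * r) powr (n - p) = r powr (n - p) * q^k"
      proof -
        have "(2^k * r) powr (n - p) = (2^k) powr (n - p) * r powr (n - p)"
          using r by (intro powr_mult; simp)
        also have "(2^k::real) powr (n - p) = (2 powr real k) powr (n - p)"
          by (subst powr_realpow) auto
        also have "\<dots> = (2 powr (n - p)) powr real k"
          by (simp add: powr_powr mult.commute)
        also have "\<dots> = q^k" unfolding q_def by (subst powr_realpow) auto
        finally show ?thesis by simp
      qed
      show ?thesis using a b c by (simp add: algebra_simps)
    qed
    have nn: "(2^k*r) powr (-p) \<ge> 0" by simp
    show "integral\<^sup>N lborel (f k) = ennreal (2 powr n * V * r powr (n - p) * q^k)"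
      unfolding e ennreal_mult'[symmetric, OF nn] X by (rule refl)
  qed
  also have "\<dots> < \<infinity>"
  proof -
    have "summable (\<lambda>k. 2 powr n * V * r powr (n - p) * q^k)"
      using q by (intro summable_mult summable_geometric) auto
    moreover have "0 \<le> 2 powr n * V * r powr (n - p) * q^k" for k using q by (simp add: V_def)
    ultimately show ?thesis using ennreal_suminf_neq_top by (auto simp: top.not_eq_extremum)
  qed
  finally show ?thesis .
qed


lemma far_bound:
  fixes w :: "'a::euclidean_space \<Rightarrow> real"
  assumes wm[measurable]: "w \<in> borel_measurable borel" and r: "r > 0" and p: "p \<ge> 0"
  shows "(\<integral>\<^sup>+q. ennreal (\<bar>w (fst q) - w (snd q)\<bar>^2 / dist (fst q) (snd q) powr p) \<partial>lborel)
   \<le> (\<integral>\<^sup>+q. ennreal (if dist (fst q) (snd q) < r then \<bar>w (fst q) - w (snd q)\<bar>^2 / dist (fst q) (snd q) powr p else 0) \<partial>lborel)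
     + 4 * (\<integral>\<^sup>+y. ennreal (if norm y \<ge> r then 1 / norm y powr p else 0) \<partial>(lborel::'a measure))
         * (\<integral>\<^sup>+x. ennreal ((w x)^2) \<partial>lborel)"
proof -
  define T where "T = (\<integral>\<^sup>+y. ennreal (if norm y \<ge> r then 1 / norm y powr p else 0) \<partial>(lborel::'a measure))"
  define P where "P = (\<integral>\<^sup>+x. ennreal ((w x)^2) \<partial>lborel)"
  define g where "g = (\<lambda>x z::'a. ennreal (if r \<le> dist x z then 1 / dist x z powr p else 0))"
  have gm0: "(\<lambda>q. g (fst q) (snd q)) \<in> borel_measurable (borel \<Otimes>\<^sub>M borel)"
    unfolding g_def by measurable
  have gc[measurable]: "(\<lambda>x. g (f x) (h x)) \<in> borel_measurable M"
    if [measurable]: "f \<in> M \<rightarrow>\<^sub>M borel" "h \<in> M \<rightarrow>\<^sub>M borel" for f h and M :: "'b measure"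
    unfolding g_def by measurable
  have inner1: "(\<integral>\<^sup>+z. g x z \<partial>lborel) = T" for x
  proof -
    have "(\<integral>\<^sup>+z. g x z \<partial>lborel) = (\<integral>\<^sup>+y. g x (x + y) \<partial>lborel)"
      by (rule nn_translate[symmetric]) measurable
    also have "\<dots> = T"
    proof -
      have dd: "dist x (x + y) = norm y" for y by (simp add: dist_norm norm_minus_commute)
      show ?thesis unfolding T_def g_def by (intro nn_integral_cong) (simp only: dd)
    qed
    finally show ?thesis .
  qed
  have inner2: "(\<integral>\<^sup>+x. g x z \<partial>lborel) = T" for z
  proof -
    have "(\<integral>\<^sup>+x. g x z \<partial>lborel) = (\<integral>\<^sup>+y. g (z + y) z \<partial>lborel)"
      by (rule nn_translate[symmetric]) measurable
    also have "\<dots> = T"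
    proof -
      have dd: "dist (z + y) z = norm y" for y by (simp add: dist_norm)
      show ?thesis unfolding T_def g_def by (intro nn_integral_cong) (simp only: dd)
    qed
    finally show ?thesis .
  qed
  have "(\<integral>\<^sup>+q. ennreal (\<bar>w (fst q) - w (snd q)\<bar>^2 / dist (fst q) (snd q) powr p) \<partial>lborel)
    \<le> (\<integral>\<^sup>+q. ennreal (if dist (fst q) (snd q) < r then \<bar>w (fst q) - w (snd q)\<bar>^2 / dist (fst q) (snd q) powr p else 0)
          + (ennreal (2 * (w (fst q))^2) * g (fst q) (snd q) + ennreal (2 * (w (snd q))^2) * g (fst q) (snd q)) \<partial>lborel)"
  proof (intro nn_integral_mono)
    fix q :: "'a \<times> 'a"
    obtain x z where q: "q = (x, z)" by (cases q)
    show "ennreal (\<bar>w (fst q) - w (snd q)\<bar>^2 / dist (fst q) (snd q) powr p)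
      \<le> ennreal (if dist (fst q) (snd q) < r then \<bar>w (fst q) - w (snd q)\<bar>^2 / dist (fst q) (snd q) powr p else 0)
          + (ennreal (2 * (w (fst q))^2) * g (fst q) (snd q) + ennreal (2 * (w (snd q))^2) * g (fst q) (snd q))"
    proof (cases "dist x z < r")
      case True then show ?thesis using q by (simp add: g_def)
    next
      case False
      then have "dist x z > 0" using r by linarith
      then have d: "dist x z powr p > 0" by simp
      have "\<bar>w x - w z\<bar>^2 \<le> 2 * (w x)^2 + 2 * (w z)^2"
      proof -
        have e1: "\<bar>w x - w z\<bar>^2 = (w x)^2 + (w z)^2 - 2*(w x * w z)" by (simp add: power2_eq_square algebra_simps)
        have e2: "0 \<le> (w x)^2 + (w z)^2 + 2*(w x * w z)" using zero_le_power2[of "w x + w z"] by (simp add: power2_eq_square algebra_simps)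
        show ?thesis using e1 e2 by linarith
      qed
      then have "\<bar>w x - w z\<bar>^2 / dist x z powr p \<le> 2 * (w x)^2 * (1 / dist x z powr p) + 2 * (w z)^2 * (1 / dist x z powr p)"
        using d by (simp add: divide_right_mono add_divide_distrib[symmetric])
      then show ?thesis using q False
        by (simp add: g_def ennreal_mult'[symmetric] ennreal_plus[symmetric] del: ennreal_plus ennreal_plus_if)
    qed
  qed
  also have "\<dots> = (\<integral>\<^sup>+q. ennreal (if dist (fst q) (snd q) < r then \<bar>w (fst q) - w (snd q)\<bar>^2 / dist (fst q) (snd q) powr p else 0) \<partial>lborel)
     + ((\<integral>\<^sup>+q. ennreal (2 * (w (fst q))^2) * g (fst q) (snd q) \<partial>lborel)
      + (\<integral>\<^sup>+q. ennreal (2 * (w (snd q))^2) * g (fst q) (snd q) \<partial>lborel))"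
    apply (subst nn_integral_add)
    subgoal by (rule meas_prod_lborel) measurable
    subgoal by (rule meas_prod_lborel) measurable
    apply (subst nn_integral_add)
    subgoal by (rule meas_prod_lborel) measurable
    subgoal by (rule meas_prod_lborel) measurable
    apply (rule refl)
    done
  also have "(\<integral>\<^sup>+q. ennreal (2 * (w (fst q))^2) * g (fst q) (snd q) \<partial>lborel) = 2 * T * P"
  proof -
    have "(\<integral>\<^sup>+q. ennreal (2 * (w (fst q))^2) * g (fst q) (snd q) \<partial>lborel)
       = (\<integral>\<^sup>+q. ennreal (2 * (w (fst q))^2) * g (fst q) (snd q) \<partial>(lborel \<Otimes>\<^sub>M lborel))"
      by (simp add: lborel_prod)
    also have "\<dots> = (\<integral>\<^sup>+x. \<integral>\<^sup>+z. ennreal (2 * (w x)^2) * g x z \<partial>lborel \<partial>lborel)"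
      by (subst lborel.nn_integral_fst[symmetric]) auto
    also have "\<dots> = (\<integral>\<^sup>+x. ennreal (2 * (w x)^2) * T \<partial>lborel)"
      by (intro nn_integral_cong) (simp add: nn_integral_cmult inner1)
    also have "\<dots> = 2 * T * P"
      unfolding P_def by (simp add: nn_integral_multc ennreal_mult' nn_integral_cmult ac_simps)
    finally show ?thesis .
  qed
  also have "(\<integral>\<^sup>+q. ennreal (2 * (w (snd q))^2) * g (fst q) (snd q) \<partial>lborel) = 2 * T * P"
  proof -
    have "(\<integral>\<^sup>+q. ennreal (2 * (w (snd q))^2) * g (fst q) (snd q) \<partial>lborel)
       = (\<integral>\<^sup>+q. ennreal (2 * (w (snd q))^2) * g (fst q) (snd q) \<partial>(lborel \<Otimes>\<^sub>M lborel))"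
      by (simp add: lborel_prod)
    also have "\<dots> = (\<integral>\<^sup>+z. \<integral>\<^sup>+x. ennreal (2 * (w z)^2) * g x z \<partial>lborel \<partial>lborel)"
      by (subst lborel_pair.nn_integral_snd[symmetric]) auto
    also have "\<dots> = (\<integral>\<^sup>+z. ennreal (2 * (w z)^2) * T \<partial>lborel)"
      by (intro nn_integral_cong) (simp add: nn_integral_cmult inner2)
    also have "\<dots> = 2 * T * P"
      unfolding P_def by (simp add: nn_integral_multc ennreal_mult' nn_integral_cmult ac_simps)
    finally show ?thesis .
  qed
  finally have X: "(\<integral>\<^sup>+q. ennreal (\<bar>w (fst q) - w (snd q)\<bar>^2 / dist (fst q) (snd q) powr p) \<partial>lborel)
   \<le> (\<integral>\<^sup>+q. ennreal (if dist (fst q) (snd q) < r then \<bar>w (fst q) - w (snd q)\<bar>^2 / dist (fst q) (snd q) powr p else 0) \<partial>lborel)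
     + (2 * T * P + 2 * T * P)" .
  have e1: "(2::ennreal) * T * P + 2 * T * P = (2 + 2) * T * P" by (simp only: distrib_right)
  have e2: "(2::ennreal) + 2 = 4" by simp
  have X2: "(\<integral>\<^sup>+q. ennreal (\<bar>w (fst q) - w (snd q)\<bar>^2 / dist (fst q) (snd q) powr p) \<partial>lborel)
   \<le> (\<integral>\<^sup>+q. ennreal (if dist (fst q) (snd q) < r then \<bar>w (fst q) - w (snd q)\<bar>^2 / dist (fst q) (snd q) powr p else 0) \<partial>lborel)
     + 4 * T * P" using X unfolding e1 e2 .
  then show ?thesis unfolding T_def P_def .
qed

lemma h0: fixes h :: "real \<Rightarrow> real" assumes "\<And>t. h (-t) = - h t" shows "h 0 = 0"
proof -
  have "h 0 = - h 0" using assms[of 0] by (metis minus_zero)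
  then show ?thesis by linarith
qed

lemma primH_nonneg:
  fixes h :: "real \<Rightarrow> real"
  assumes odd: "\<And>t. h (-t) = - h t" and sm: "strict_mono h"
  shows "primH h t \<ge> 0"
proof -
  have z: "h 0 = 0" by (rule h0) (rule odd)
  have pos: "x > 0 \<Longrightarrow> h x > 0" for x using sm z by (metis strict_monoD)
  have neg: "x < 0 \<Longrightarrow> h x < 0" for x using sm z by (metis strict_monoD)
  show ?thesis
  proof (cases "0 \<le> t")
    case True
    have "0 \<le> integral\<^sup>L lborel (\<lambda>x. indicator (einterval (ereal 0) (ereal t)) x *\<^sub>R h x)"
      by (intro integral_nonneg_AE AE_I2) (auto simp: indicator_def einterval_def less_imp_le pos)
    then show ?thesis using True
      by (simp add: primH_def interval_lebesgue_integral_def set_lebesgue_integral_def)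
  next
    case False
    have "0 \<le> integral\<^sup>L lborel (\<lambda>x. - (indicator (einterval (ereal t) (ereal 0)) x *\<^sub>R h x))"
      by (intro integral_nonneg_AE AE_I2) (auto simp: indicator_def einterval_def less_imp_le neg)
    then show ?thesis using False
      by (simp add: primH_def interval_lebesgue_integral_def set_lebesgue_integral_def)
  qed
qed

lemma integral_le_nonint:
  fixes f g :: "'a \<Rightarrow> real"
  assumes "integrable M g" "\<And>x. f x \<le> g x" "\<And>x. 0 \<le> g x"
  shows "integral\<^sup>L M f \<le> integral\<^sup>L M g"
proof (cases "integrable M f")
  case True then show ?thesis using assms by (intro integral_mono) auto
next
  case False then show ?thesis using assms by (simp add: not_integrable_integral_eq integral_nonneg_AE)
qed

lemma ae_prod_transfer:
  fixes u w :: "'a::euclidean_space \<Rightarrow> real"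
  assumes "AE x in lborel. u x = w x"
  shows "AE q in (lborel::('a\<times>'a) measure). u (fst q) = w (fst q) \<and> u (snd q) = w (snd q)"
proof -
  obtain N where N0: "{x\<in>space lborel. \<not> u x = w x} \<subseteq> N" "emeasure lborel N = 0" "N \<in> sets lborel"
    using AE_E[OF assms] by blast
  then have N: "N \<in> null_sets lborel" "{x\<in>space lborel. \<not> u x = w x} \<subseteq> N" by (auto simp: null_sets_def)
  have Ns: "N \<in> sets lborel" using N(1) by auto
  have "N \<times> UNIV \<union> UNIV \<times> N \<in> null_sets (lborel \<Otimes>\<^sub>M lborel)"
    using N(1) Ns by (intro null_sets.Un lborel.times_in_null_sets1 lborel.times_in_null_sets2) auto
  then have "AE q in (lborel \<Otimes>\<^sub>M lborel). u (fst q) = w (fst q) \<and> u (snd q) = w (snd q)"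
    by (rule AE_I') (use N(2) in auto)
  then show ?thesis unfolding lborel_prod .
qed

lemma cns_pos: assumes "0 < s" "s < 1" shows "cns n s > 0"
proof -
  have "Gamma ((real n + 2 * s)/2) > 0" using assms by (intro Gamma_real_pos) auto
  moreover have "Gamma (2 - s) > 0" using assms by (intro Gamma_real_pos) auto
  ultimately show ?thesis using assms unfolding cns_def by (simp add: field_simps)
qed

theorem lemma2p7:
  fixes \<Omega> :: "(real^'n) set"
    and s c C :: real and rho :: ereal
    and K :: "real^'n \<Rightarrow> real^'n \<Rightarrow> real"
    and h :: "real \<Rightarrow> real"
    and \<eta> \<zeta> :: "real^'n \<Rightarrow> real"
  assumes s: "0 < s" "s < 1"
    and \<Omega>: "open \<Omega>" "bounded \<Omega>" "lipschitz_boundary \<Omega>"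
    and K_meas: "(\<lambda>p. K (fst p) (snd p)) \<in> borel_measurable (lebesgue :: ((real^'n) \<times> (real^'n)) measure)"
    and K_sym: "\<And>x z. K x z = K z x"
    and cC: "c > 0" "C > 0" and rho_pos: "rho > 0"
    and K_lower: "\<And>x z. x \<noteq> z \<Longrightarrow>
        (if ereal (dist x z) < rho then c else 0) / dist x z powr (real CARD('n) + 2 * s) \<le> K x z"
    and K_upper: "\<And>x z. x \<noteq> z \<Longrightarrow> K x z \<le> C / dist x z powr (real CARD('n) + 2 * s)"
    and h: "continuous_on UNIV h" "\<And>t. h (-t) = - h t" "strict_mono h"
    and \<eta>_meas: "set_borel_measurable lebesgue \<Omega> \<eta>"
    and \<eta>_bdd: "\<exists>M. AE x in lebesgue. x \<in> \<Omega> \<longrightarrow> \<bar>\<eta> x\<bar> \<le> M"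
    and \<eta>_nonneg: "AE x in lebesgue. x \<in> \<Omega> \<longrightarrow> \<eta> x \<ge> 0"
    and \<zeta>: "set_borel_measurable lebesgue \<Omega> \<zeta>" "set_integrable lebesgue \<Omega> (\<lambda>x. (\<zeta> x)^2)"
  shows "\<forall>M::real. \<exists>R. \<forall>u \<in> Hs0 s \<Omega>. gagliardo_seminorm s u > R \<longrightarrow>
           energyJ K h \<eta> \<zeta> \<Omega> u / ereal (gagliardo_seminorm s u) \<ge> ereal M"
proof -
  define p where "p = real CARD('n) + 2 * s"
  have p0: "p \<ge> 0" and pD: "p > DIM(real^'n)" using s by (auto simp: p_def)
  obtain r where r: "r > 0" "ereal r \<le> rho"
  proof (cases rho)
    case (real x) then show ?thesis using that rho_pos by auto
  next
    case PInf then show ?thesis using that[of 1] by auto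
  next
    case MInf then show ?thesis using rho_pos by auto
  qed
  obtain R where R: "R > 0" "\<Omega> \<subseteq> ball 0 R" using bounded_subset_ballD[OF \<Omega>(2)] by blast
  obtain N :: nat where N: "2*R/(r/4) \<le> real N" using real_arch_simple by blast
  have NR: "2*R \<le> real N * (r/4)" using N r by (simp add: field_simps)
  have Npos: "real N > 0"
  proof (rule ccontr)
    assume "\<not> real N > 0" then have "real N = 0" by simp
    then show False using NR R by simp
  qed
  define a :: "real^'n" where "a = (3*r/8) *\<^sub>R sgn (One::real^'n)"
  have na: "norm a = 3*r/8" using r by (simp add: a_def norm_sgn)
  define mb where "mb = unit_ball_vol (real DIM(real^'n)) * (r/8)^DIM(real^'n)"
  have mb: "mb > 0" using r by (simp add: mb_def)
  have emb: "emeasure lborel (ball a (r/8)) = ennreal mb"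
    unfolding mb_def using r by (simp add: emeasure_ball)
  define A where "A = real N * real N * r powr p / mb"
  have A: "A > 0" using Npos r mb by (simp add: A_def)
  obtain t where t: "(\<integral>\<^sup>+y. ennreal (if norm y \<ge> r then 1 / norm y powr p else 0) \<partial>(lborel::(real^'n) measure)) = ennreal t" "t \<ge> 0"
    using tail_finite[OF r(1) pD] by (auto simp: less_top_ennreal)
  define Z where "Z = set_lebesgue_integral lebesgue \<Omega> (\<lambda>x. (\<zeta> x)^2)"
  define cn where "cn = cns CARD('n) s"
  have cn: "cn > 0" unfolding cn_def using cns_pos[OF s] .
  define \<alpha> where "\<alpha> = c / (8 * (1 + 4*t*A) * cn)"
  have tA: "1 + 4*t*A > 0" using t(2) A by (simp add: add_pos_nonneg)
  have \<alpha>: "\<alpha> > 0" unfolding \<alpha>_def using cC tA cn by (intro divide_pos_pos mult_pos_pos) auto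
  define \<beta> where "\<beta> = 2*A*Z/c"
  have key: "energyJ K h \<eta> \<zeta> \<Omega> u \<ge> ereal (\<alpha> * (gagliardo_seminorm s u)^2 - \<beta>)" if u: "u \<in> Hs0 s \<Omega>" for u
  proof -
    have um: "u \<in> borel_measurable lebesgue" and u2: "integrable lebesgue (\<lambda>x. (u x)^2)"
      and Gfin: "gagliardo_integral s u < \<infinity>" and u0: "AE x in lebesgue. x \<notin> \<Omega> \<longrightarrow> u x = 0"
      using u by (auto simp: Hs0_def Hs_def)
    obtain v where vm: "v \<in> borel_measurable lborel" and uv: "AE x in lborel. u x = v x"
      using completion_ex_borel_measurable_real[OF um] by blast
    have vb[measurable]: "v \<in> borel_measurable borel" using vm by simp
    have \<Omega>b[measurable]: "\<Omega> \<in> sets borel" using \<Omega>(1) by auto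
    define w where "w = (\<lambda>x. indicator \<Omega> x * v x)"
    have wm[measurable]: "w \<in> borel_measurable borel" unfolding w_def by measurable
    have uw: "AE x in lborel. u x = w x"
    proof -
      have u0': "AE x in lborel. x \<notin> \<Omega> \<longrightarrow> u x = 0" using u0 by (simp add: AE_completion_iff)
      show ?thesis using uv u0' by eventually_elim (auto simp: w_def)
    qed
    have w0: "w x = 0" if "norm x \<ge> R" for x
    proof -
      have "x \<notin> \<Omega>" using R(2) that by (auto simp: subset_iff)
      then show ?thesis by (simp add: w_def)
    qed
    define Gw where "Gw = (\<integral>\<^sup>+q. ennreal (\<bar>w (fst q) - w (snd q)\<bar>^2 / dist (fst q) (snd q) powr p) \<partial>(lborel::((real^'n) \<times> (real^'n)) measure))"
    define Gn where "Gn = (\<integral>\<^sup>+q. ennreal (if dist (fst q) (snd q) < r then \<bar>w (fst q) - w (snd q)\<bar>^2 / dist (fst q) (snd q) powr p else 0) \<partial>(lborel::((real^'n) \<times> (real^'n)) measure))"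
    define Pw where "Pw = (\<integral>\<^sup>+x. ennreal ((w x)^2) \<partial>(lborel::(real^'n) measure))"
    define pu where "pu = integral\<^sup>L lebesgue (\<lambda>x. (u x)^2)"
    have pu0: "pu \<ge> 0" unfolding pu_def by (intro integral_nonneg_AE) auto
    have ae2: "AE q in (lborel::((real^'n) \<times> (real^'n)) measure). u (fst q) = w (fst q) \<and> u (snd q) = w (snd q)"
      by (rule ae_prod_transfer[OF uw])
    have G_eq: "gagliardo_integral s u = Gw"
      unfolding gagliardo_integral_def Gw_def p_def nn_integral_completion
      by (rule nn_integral_cong_AE, rule eventually_mono[OF ae2]) auto
    have Gn_le: "Gn \<le> Gw" unfolding Gn_def Gw_def by (intro nn_integral_mono) auto
    have Pw_eq: "Pw = ennreal pu"
    proof -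
      have "Pw = (\<integral>\<^sup>+x. ennreal ((u x)^2) \<partial>(lborel::(real^'n) measure))"
        unfolding Pw_def by (rule nn_integral_cong_AE, rule eventually_mono[OF uw]) auto
      also have "\<dots> = (\<integral>\<^sup>+x. ennreal ((u x)^2) \<partial>lebesgue)" by (simp add: nn_integral_completion)
      also have "\<dots> = ennreal pu" unfolding pu_def by (rule nn_integral_eq_integral[OF u2]) auto
      finally show ?thesis .
    qed
    have poi: "ennreal mb * Pw \<le> ennreal (real N * real N * r powr p) * Gn"
      using poinc[OF wm w0 R(1) r(1) NR na p0] unfolding emb Pw_def Gn_def .
    have far: "Gw \<le> Gn + 4 * ennreal t * Pw"
      using far_bound[OF wm r(1) p0] unfolding t(1) Gw_def Gn_def Pw_def .
    have "Gw < \<infinity>" using G_eq Gfin by simp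
    then obtain gw where gw: "Gw = ennreal gw" "gw \<ge> 0" by (auto simp: less_top_ennreal)
    have "Gn < \<infinity>" using Gn_le gw by (simp add: le_less_trans)
    then obtain gn where gn: "Gn = ennreal gn" "gn \<ge> 0" by (auto simp: less_top_ennreal)
    have i1: "mb * pu \<le> real N * real N * r powr p * gn"
    proof -
      have "ennreal (mb * pu) \<le> ennreal (real N * real N * r powr p * gn)"
        using poi mb pu0 gn r by (simp add: Pw_eq ennreal_mult)
      then show ?thesis using gn r by (subst (asm) ennreal_le_iff) auto
    qed
    have puA: "pu \<le> A * gn"
      using i1 mb by (simp add: A_def field_simps)
    have i2: "gw \<le> gn + 4 * t * pu"
    proof -
      have "ennreal gw \<le> ennreal (gn + 4 * t * pu)"
        using far gw gn t(2) pu0 by (simp add: Pw_eq ennreal_mult)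
      then show ?thesis using gn t(2) pu0 by (subst (asm) ennreal_le_iff) auto
    qed
    define \<sigma> where "\<sigma> = gagliardo_seminorm s u"
    have \<sigma>2: "\<sigma>^2 = cn * gw"
      unfolding \<sigma>_def gagliardo_seminorm_def G_eq gw(1) cn_def using gw(2) cn cn_def by simp
    have gn_low: "\<alpha> * \<sigma>^2 \<le> c * gn / 8"
    proof -
      have "4 * t * pu \<le> 4 * t * (A * gn)" using puA t(2) by (intro mult_left_mono) auto
      then have gwb: "gw \<le> (1 + 4*t*A) * gn" using i2 by (simp add: algebra_simps)
      have gen: "(c / (X * cn)) * (cn * gw) = c * gw / X" for X
        using cn by (cases "X = 0") (auto simp: field_simps)
      have "\<alpha> * \<sigma>^2 = c * gw / (8 * (1 + 4*t*A))" unfolding \<sigma>2 \<alpha>_def by (rule gen)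
      also have "\<dots> \<le> c * ((1 + 4*t*A) * gn) / (8 * (1 + 4*t*A))"
        using gwb cC tA by (intro divide_right_mono mult_left_mono) auto
      also have "\<dots> = c * gn / 8" using tA by (simp add: field_simps)
      finally show ?thesis .
    qed
    have main: "ereal (\<alpha> * \<sigma>^2 - \<beta>) \<le> energyJ K h \<eta> \<zeta> \<Omega> u"
    proof (cases "set_integrable lebesgue \<Omega> (\<lambda>x. \<eta> x * primH h (u x))")
      case False then show ?thesis by (simp add: energyJ_def)
    next
      case True
      define Q where "Q = (\<integral>\<^sup>+ q. ennreal (\<bar>u (fst q) - u (snd q)\<bar>^2 * K (fst q) (snd q)) \<partial>(lebesgue :: ((real^'n) \<times> (real^'n)) measure))"
      define I1 where "I1 = set_lebesgue_integral lebesgue \<Omega> (\<lambda>x. \<eta> x * primH h (u x))"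
      define I2 where "I2 = set_lebesgue_integral lebesgue \<Omega> (\<lambda>x. \<zeta> x * u x)"
      have J: "energyJ K h \<eta> \<zeta> \<Omega> u = ereal (1/4) * enn2ereal Q + ereal I1 - ereal I2"
        using True unfolding energyJ_def Q_def I1_def I2_def by simp
      have nearm: "(\<lambda>q. ennreal (if dist (fst q) (snd q) < r then \<bar>w (fst q) - w (snd q)\<bar>^2 / dist (fst q) (snd q) powr p else 0))
          \<in> borel_measurable (lborel::((real^'n) \<times> (real^'n)) measure)"
        by (rule meas_prod_lborel) measurable
      have Qge: "ennreal (c * gn) \<le> Q"
      proof -
        have "ennreal (c * gn) = ennreal c * Gn" using gn cC by (simp add: ennreal_mult)
        also have "\<dots> = (\<integral>\<^sup>+q. ennreal c * ennreal (if dist (fst q) (snd q) < r then \<bar>w (fst q) - w (snd q)\<bar>^2 / dist (fst q) (snd q) powr p else 0) \<partial>lborel)"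
          unfolding Gn_def by (rule nn_integral_cmult[symmetric, OF nearm])
        also have "\<dots> \<le> (\<integral>\<^sup>+q. ennreal (\<bar>w (fst q) - w (snd q)\<bar>^2 * K (fst q) (snd q)) \<partial>lborel)"
        proof (intro nn_integral_mono)
          fix q :: "(real^'n) \<times> (real^'n)"
          obtain x z where q: "q = (x, z)" by (cases q)
          show "ennreal c * ennreal (if dist (fst q) (snd q) < r then \<bar>w (fst q) - w (snd q)\<bar>^2 / dist (fst q) (snd q) powr p else 0)
              \<le> ennreal (\<bar>w (fst q) - w (snd q)\<bar>^2 * K (fst q) (snd q))"
          proof (cases "x = z")
            case True then show ?thesis using q by simp
          next
            case False
            show ?thesis
            proof (cases "dist x z < r")
              case True
              have "ereal (dist x z) < ereal r" using True by simp
              then have "ereal (dist x z) < rho" using r(2) by (rule less_le_trans)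
              then have Kx: "c / dist x z powr p \<le> K x z" using K_lower[OF False] by (simp add: p_def)
              have "\<bar>w x - w z\<bar>^2 * (c / dist x z powr p) \<le> \<bar>w x - w z\<bar>^2 * K x z"
                using Kx by (intro mult_left_mono) auto
              moreover have "c * (\<bar>w x - w z\<bar>^2 / dist x z powr p) = \<bar>w x - w z\<bar>^2 * (c / dist x z powr p)"
                by simp
              ultimately have "c * (\<bar>w x - w z\<bar>^2 / dist x z powr p) \<le> \<bar>w x - w z\<bar>^2 * K x z" by metis
              then show ?thesis using q True cC by (simp add: ennreal_mult'[symmetric] ennreal_leI)
            next
              case False then show ?thesis using q by simp
            qed
          qed
        qed
        also have "\<dots> = Q" unfolding Q_def nn_integral_completion
          by (rule nn_integral_cong_AE, rule eventually_mono[OF ae2]) auto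
        finally show ?thesis .
      qed
      have I1: "I1 \<ge> 0"
      proof -
        have "AE x in lebesgue. 0 \<le> indicator \<Omega> x *\<^sub>R (\<eta> x * primH h (u x))"
          using \<eta>_nonneg by eventually_elim (auto simp: indicator_def intro!: mult_nonneg_nonneg primH_nonneg[OF h(2) h(3)])
        then show ?thesis unfolding I1_def set_lebesgue_integral_def by (rule integral_nonneg_AE)
      qed
      define \<epsilon> where "\<epsilon> = c / (4*A)"
      have \<epsilon>: "\<epsilon> > 0" using cC A by (simp add: \<epsilon>_def)
      have I2: "I2 \<le> Z / (2*\<epsilon>) + \<epsilon>/2 * pu"
      proof -
        define g where "g = (\<lambda>x. 1/(2*\<epsilon>) * (indicator \<Omega> x *\<^sub>R (\<zeta> x)^2) + \<epsilon>/2 * (u x)^2)"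
        have zi: "integrable lebesgue (\<lambda>x. indicator \<Omega> x *\<^sub>R (\<zeta> x)^2)" using \<zeta>(2) by (simp add: set_integrable_def)
        have gi: "integrable lebesgue g" unfolding g_def using zi u2 by (intro Bochner_Integration.integrable_add Bochner_Integration.integrable_mult_right)
        have "I2 \<le> integral\<^sup>L lebesgue g" unfolding I2_def set_lebesgue_integral_def
        proof (rule integral_le_nonint[OF gi])
          fix x
          show "indicator \<Omega> x *\<^sub>R (\<zeta> x * u x) \<le> g x"
          proof (cases "x \<in> \<Omega>")
            case True
            have "0 \<le> (\<zeta> x - \<epsilon> * u x)^2 / (2*\<epsilon>)" using \<epsilon> by simp
            also have "\<dots> = (\<zeta> x)^2/(2*\<epsilon>) - \<zeta> x * u x + \<epsilon>/2 * (u x)^2" using \<epsilon> by (simp add: power2_eq_square field_simps)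
            finally show ?thesis using True by (simp add: g_def)
          next
            case False then show ?thesis using \<epsilon> by (simp add: g_def)
          qed
        next
          fix x show "0 \<le> g x" using \<epsilon> by (simp add: g_def indicator_def)
        qed
        also have "integral\<^sup>L lebesgue g = Z/(2*\<epsilon>) + \<epsilon>/2 * pu"
        proof -
          have "integral\<^sup>L lebesgue g = 1/(2*\<epsilon>) * integral\<^sup>L lebesgue (\<lambda>x. indicator \<Omega> x *\<^sub>R (\<zeta> x)^2) + \<epsilon>/2 * pu"
            unfolding g_def pu_def using zi u2 by (simp add: Bochner_Integration.integral_add Bochner_Integration.integrable_mult_right)
          then show ?thesis by (simp add: Z_def set_lebesgue_integral_def)
        qed
        finally show ?thesis .
      qed
      show ?thesis
      proof (cases "Q = top")
        case True then show ?thesis unfolding J by simp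
      next
        case False
        then obtain q where q: "Q = ennreal q" "q \<ge> 0" by (auto simp: less_top_ennreal top.not_eq_extremum)
        have qc: "c * gn \<le> q" using Qge q gn cC by simp
        have J2: "energyJ K h \<eta> \<zeta> \<Omega> u = ereal (q/4 + I1 - I2)" unfolding J q using q by simp
        have "\<alpha> * \<sigma>^2 - \<beta> \<le> q/4 + I1 - I2"
        proof -
          have "\<epsilon>/2 * pu \<le> \<epsilon>/2 * (A * gn)" using puA \<epsilon> by (intro mult_left_mono) auto
          moreover have "\<epsilon>/2 * (A*gn) = c*gn/8" using A by (simp add: \<epsilon>_def field_simps)
          moreover have "Z/(2*\<epsilon>) = \<beta>" using A cC by (simp add: \<epsilon>_def \<beta>_def field_simps)
          ultimately show ?thesis using gn_low I1 I2 qc by linarith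
        qed
        then show ?thesis unfolding J2 by simp
      qed
    qed
    then show ?thesis by (simp add: \<sigma>_def)
  qed

  show ?thesis
  proof
    fix M :: real
    define R' where "R' = max 1 ((\<bar>M\<bar> + \<bar>\<beta>\<bar>) / \<alpha>)"
    show "\<exists>R. \<forall>u \<in> Hs0 s \<Omega>. gagliardo_seminorm s u > R \<longrightarrow>
           energyJ K h \<eta> \<zeta> \<Omega> u / ereal (gagliardo_seminorm s u) \<ge> ereal M"
    proof (intro exI[of _ R'] ballI impI)
      fix u assume u: "u \<in> Hs0 s \<Omega>" and gt: "gagliardo_seminorm s u > R'"
      define \<sigma> where "\<sigma> = gagliardo_seminorm s u"
      have \<sigma>1: "\<sigma> \<ge> 1" using gt by (simp add: \<sigma>_def R'_def)
      have \<sigma>2: "\<alpha> * \<sigma> \<ge> \<bar>M\<bar> + \<bar>\<beta>\<bar>" using gt \<alpha> by (simp add: \<sigma>_def R'_def field_simps)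
      have "M * \<sigma> \<le> \<alpha> * \<sigma>^2 - \<beta>"
      proof -
        have "(\<bar>M\<bar> + \<bar>\<beta>\<bar>) * \<sigma> \<le> \<alpha> * \<sigma> * \<sigma>" using \<sigma>2 \<sigma>1 by (intro mult_right_mono) auto
        moreover have "\<bar>\<beta>\<bar> \<le> \<bar>\<beta>\<bar> * \<sigma>" using \<sigma>1 by (simp add: mult_le_cancel_left1)
        moreover have "M * \<sigma> \<le> \<bar>M\<bar> * \<sigma>" using \<sigma>1 by (intro mult_right_mono) auto
        ultimately show ?thesis by (simp add: power2_eq_square algebra_simps)
      qed
      then have "ereal M \<le> ereal ((\<alpha> * \<sigma>^2 - \<beta>) / \<sigma>)" using \<sigma>1 by (simp add: field_simps)
      also have "\<dots> = ereal (\<alpha> * \<sigma>^2 - \<beta>) / ereal \<sigma>" using \<sigma>1 by simp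
      also have "\<dots> \<le> energyJ K h \<eta> \<zeta> \<Omega> u / ereal \<sigma>"
        using key[OF u] \<sigma>1 by (intro ereal_divide_right_mono) (auto simp: \<sigma>_def)
      finally show "energyJ K h \<eta> \<zeta> \<Omega> u / ereal (gagliardo_seminorm s u) \<ge> ereal M" by (simp add: \<sigma>_def)
    qed
  qed
qed

end
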